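(* For all integers $n\ge0$, $r\ge0$ and every real $x\ne0$, the $r$th derivative of $\mathfrak{C}_n$ satisfies $$\mathfrak{C}_n^{(r)}(x)=\frac{r!}{x^r}\sum_{k=0}^{r}\binom rk(-1)^{r-k}\sum_{j_0+j_1+\cdots+j_k=n}\binom{n}{j_0,j_1,\dots,j_k}\mathfrak{C}_{j_0}(x)\mathfrak{C}_{j_1}(x)\cdots\mathfrak{C}_{j_k}(x),$$ where the inner sum runs over all tuples of non-negative integers $(j_0,\dots,j_k)$ with sum $n$.
   Context: For $n\ge1$ the central factorial is $x^{[n]}=x\,(x+\tfrac n2-1)(x+\tfrac n2-2)\cdots(x-\tfrac n2+1)$ (a product of $n$ factors), and $x^{[0]}=1$. The central factorial numbers of the second kind $T(n,k)$ ($0\le k\le n$) are defined by $x^n=\sum_{k=0}^n T(n,k)\,x^{[k]}$; equivalently $T(n,k)=\frac1{k!}\sum_{j=0}^k(-1)^j\binom kj\left(\frac k2-j\right)^n$, and $T(n,k)=0$ for $k>n$. The $n$th central Fubini-like polynomial is $\mathfrak{C}_n(x)=\sum_{k=0}^n k!\,T(n,k)\,x^k$. *)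

theory Defs
  imports "HOL-Analysis.Analysis"
begin

text \<open>Central factorial numbers of the second kind, via the explicit formula
 T(n,k) = 1/k! * sum_{j=0}^k (-1)^j binom(k,j) (k/2 - j)^n  (zero for k > n).\<close>
definition central_T :: "nat \<Rightarrow> nat \<Rightarrow> real" where
  "central_T n k = (if k > n then 0 else
     (1 / fact k) * (\<Sum>j\<le>k. (-1) ^ j * real (k choose j) * (real k / 2 - real j) ^ n))"

definition central_fubini :: "nat \<Rightarrow> real poly" where
  "central_fubini n = (\<Sum>k\<le>n. monom (fact k * central_T n k) k)"

text \<open>Compositions of n into k+1 non-negative parts (j_0,...,j_k), encoded as
 functions nat => nat vanishing beyond index k.\<close>
definition compositions :: "nat \<Rightarrow> nat \<Rightarrow> (nat \<Rightarrow> nat) set" where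
  "compositions k n = {j. (\<forall>i>k. j i = 0) \<and> (\<Sum>i\<le>k. j i) = n}"

definition multinom :: "nat \<Rightarrow> nat \<Rightarrow> (nat \<Rightarrow> nat) \<Rightarrow> real" where
  "multinom n k j = fact n / (\<Prod>i\<le>k. fact (j i))"

end

theory Submission imports Defs "HOL-Computational_Algebra.Formal_Power_Series" begin
no_notation vec_nth (infixl \<open>$\<close> 90)
notation fps_nth (infixl \<open>$\<close> 75)


definition ff :: "nat \<Rightarrow> nat \<Rightarrow> real" where
  "ff k r = (if r \<le> k then fact k / fact (k - r) else 0)"

lemma hpderiv_monom: "(pderiv ^^ r) (monom (c::real) k) = monom (c * ff k r) (k - r)"
proof (induction r)
  case 0 then show ?case by (simp add: ff_def)
next
  case (Suc r)
  have "(pderiv ^^ Suc r) (monom c k) = pderiv (monom (c * ff k r) (k - r))"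
    using Suc by simp
  also have "\<dots> = monom (c * ff k (Suc r)) (k - Suc r)"
  proof (cases "Suc r \<le> k")
    case True
    have "fact k / fact (k - r) * real (k - r) = fact k / fact (k - Suc r)"
      using True by (simp add: fact_reduce[of "k - r"] Suc_diff_Suc field_simps)
    then have "real (k - r) * (c * (fact k / fact (k - r))) = c * (fact k / fact (k - Suc r))"
      by (metis mult.commute mult.left_commute times_divide_eq_right)
    then show ?thesis using True by (simp add: pderiv_monom ff_def)
  next
    case False
    then show ?thesis by (auto simp: pderiv_monom ff_def)
  qed
  finally show ?case .
qed

lemma fps_m1_pow: "(-1::real fps) ^ m = fps_const ((-1) ^ m)"
proof -
  have "(-1::real fps) = fps_const (-1)" by (metis fps_const_1_eq_1 fps_const_neg)
  then show ?thesis by (simp only: fps_const_power)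
qed

definition S :: "real fps" where "S = fps_exp (1/2) - fps_exp (-1/2)"

lemma S0: "S $ 0 = 0" by (simp add: S_def)

lemma S_pow_nth: "(S ^ k) $ m = (\<Sum>j\<le>k. (-1)^j * real (k choose j) * (real k / 2 - real j) ^ m) / fact m"
proof -
  have "S ^ k = (fps_exp (1/2) + (- fps_exp (-1/2))) ^ k" by (simp add: S_def)
  also have "\<dots> = (\<Sum>j\<le>k. of_nat (k choose j) * (- fps_exp (-1/2)) ^ j * fps_exp (1/2) ^ (k - j))"
    by (subst add.commute, rule binomial_ring)
  also have "\<dots> = (\<Sum>j\<le>k. fps_const ((-1)^j * real (k choose j)) * fps_exp (real k / 2 - real j))"
  proof (rule sum.cong[OF refl])
    fix j assume j: "j \<in> {..k}"
    have e1: "(- fps_exp (-1/2::real)) ^ j = fps_const ((-1)^j) * fps_exp (of_nat j * (-1/2))"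
      by (subst power_minus) (simp only: fps_m1_pow fps_exp_power_mult)
    have e2: "fps_exp (1/2::real) ^ (k - j) = fps_exp (of_nat (k-j) * (1/2))"
      by (simp only: fps_exp_power_mult)
    have e3: "fps_exp (of_nat j * (-1/2)) * fps_exp (of_nat (k-j) * (1/2)) = fps_exp (real k / 2 - real j)"
      using j by (simp add: fps_exp_add_mult[symmetric] of_nat_diff field_simps)
    have oc: "(of_nat c :: real fps) = fps_const (real c)" for c by (simp add: fps_of_nat)
    have e4: "fps_const ((-1)^j * real (k choose j)) = fps_const ((-1::real)^j) * fps_const (real (k choose j))"
      by simp
    have "of_nat (k choose j) * (- fps_exp (-1/2)) ^ j * fps_exp (1/2) ^ (k - j) =
       (fps_const ((-1::real)^j) * fps_const (real (k choose j))) *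
       (fps_exp (of_nat j * (-1/2)) * fps_exp (of_nat (k-j) * (1/2)))"
      unfolding e1 e2 oc by (simp only: mult_ac)
    then show "of_nat (k choose j) * (- fps_exp (-1/2)) ^ j * fps_exp (1/2) ^ (k - j) =
       fps_const ((-1)^j * real (k choose j)) * fps_exp (real k / 2 - real j)"
      unfolding e3 e4 .
  qed
  finally show ?thesis by (simp add: fps_sum_nth sum_divide_distrib)
qed

lemma T_S: "k \<le> m \<Longrightarrow> fact k * central_T m k = fact m * (S ^ k) $ m"
  by (simp add: central_T_def S_pow_nth)



lemma comp_finite: "finite (compositions k n)"
proof -
  have "compositions k n \<subseteq> (\<lambda>f i. if i \<le> k then f i else 0) ` (PiE {..k} (\<lambda>_. {..n}))"
  proof
    fix j assume j: "j \<in> compositions k n"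
    have "j = (\<lambda>i. if i \<le> k then restrict j {..k} i else 0)"
      using j by (auto simp: compositions_def fun_eq_iff)
    moreover have "restrict j {..k} \<in> PiE {..k} (\<lambda>_. {..n})"
    proof -
      have "\<forall>i\<le>k. j i \<le> n" using j unfolding compositions_def
        by (metis (mono_tags, lifting) atMost_iff finite_atMost member_le_sum mem_Collect_eq zero_le)
      then show ?thesis by auto
    qed
    ultimately show "j \<in> (\<lambda>f i. if i \<le> k then f i else 0) ` (PiE {..k} (\<lambda>_. {..n}))" by blast
  qed
  then show ?thesis by (rule finite_subset) (auto intro: finite_PiE)
qed

lemma comp_zero: "compositions 0 n = {(\<lambda>_. 0)(0 := n)}"
  by (auto simp: compositions_def fun_eq_iff)

lemma comp_sum_Suc:
  "(\<Sum>j'\<in>compositions (Suc k) n. g j') =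
   (\<Sum>(a,j)\<in>(SIGMA a:{..n}. compositions k (n - a)). g (j(Suc k := a)))"
proof (rule sum.reindex_bij_witness[where j = "\<lambda>j'. (j' (Suc k), j'(Suc k := 0))"
      and i = "\<lambda>(a,j). j(Suc k := a)"])
  fix j' assume j': "j' \<in> compositions (Suc k) n"
  show "(case (j' (Suc k), j'(Suc k := 0)) of (a, j) \<Rightarrow> j(Suc k := a)) = j'" by auto
  have s: "(\<Sum>i\<le>k. j' i) + j' (Suc k) = n" using j' by (simp add: compositions_def)
  have s2: "(\<Sum>i\<le>k. (j'(Suc k := 0)) i) = (\<Sum>i\<le>k. j' i)" by (rule sum.cong) auto
  show "(j' (Suc k), j'(Suc k := 0)) \<in> (SIGMA a:{..n}. compositions k (n - a))"
    using j' s s2 by (auto simp: compositions_def)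
  show "(case (j' (Suc k), j'(Suc k := 0)) of (a, j) \<Rightarrow> g (j(Suc k := a))) = g j'" by auto
next
  fix b assume b: "b \<in> (SIGMA a:{..n}. compositions k (n - a))"
  then obtain a j where bj: "b = (a, j)" "a \<le> n" "j \<in> compositions k (n - a)" by auto
  then have j0: "j (Suc k) = 0" by (simp add: compositions_def)
  show "((case b of (a, j) \<Rightarrow> j(Suc k := a)) (Suc k), (case b of (a, j) \<Rightarrow> j(Suc k := a))(Suc k := 0)) = b"
    using bj j0 by (auto simp: fun_eq_iff)
  have s2: "(\<Sum>i\<le>k. (j(Suc k := a)) i) = (\<Sum>i\<le>k. j i)" by (rule sum.cong) auto
  show "(case b of (a, j) \<Rightarrow> j(Suc k := a)) \<in> compositions (Suc k) n"
    using bj s2 by (auto simp: compositions_def)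
qed

lemma fps_power_comp: "((F::real fps) ^ Suc k) $ n = (\<Sum>j\<in>compositions k n. \<Prod>i\<le>k. F $ (j i))"
proof (induction k arbitrary: n)
  case 0
  then show ?case by (simp add: comp_zero)
next
  case (Suc k)
  have "(F ^ Suc (Suc k)) $ n = (\<Sum>a=0..n. F $ a * (F ^ Suc k) $ (n - a))"
    by (simp only: power_Suc[of F "Suc k"] fps_mult_nth)
  also have "\<dots> = (\<Sum>a\<le>n. \<Sum>j\<in>compositions k (n - a). (\<Prod>i\<le>k. F $ (j i)) * F $ a)"
    by (simp only: Suc.IH atLeast0AtMost sum_distrib_left) (simp add: mult.commute)
  also have "\<dots> = (\<Sum>(a,j)\<in>(SIGMA a:{..n}. compositions k (n - a)). (\<Prod>i\<le>k. F $ (j i)) * F $ a)"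
    by (rule sum.Sigma) (auto simp: comp_finite)
  also have "\<dots> = (\<Sum>(a,j)\<in>(SIGMA a:{..n}. compositions k (n - a)). (\<Prod>i\<le>Suc k. F $ ((j(Suc k := a)) i)))"
  proof -
    have key: "(\<Prod>i\<le>k. F $ (j i)) * F $ a = (\<Prod>i\<le>Suc k. F $ ((j(Suc k := a)) i))" for a j
    proof -
      have "(\<Prod>i\<le>k. F $ ((j(Suc k := a)) i)) = (\<Prod>i\<le>k. F $ (j i))" by (rule prod.cong) auto
      then show ?thesis by simp
    qed
    show ?thesis by (simp only: key)
  qed
  also have "\<dots> = (\<Sum>j\<in>compositions (Suc k) n. \<Prod>i\<le>Suc k. F $ (j i))"
    by (rule comp_sum_Suc[symmetric])
  finally show ?case .
qed



definition U :: "real fps" where "U = Abs_fps (\<lambda>_. 1)"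

lemma U_deriv: "fps_deriv U = U^2"
  by (simp add: fps_eq_iff power2_eq_square fps_mult_nth U_def)

lemma Uder: "(fps_deriv^^r) U = fps_const (fact r) * U^(Suc r)"
proof (induction r)
  case 0 then show ?case by simp
next
  case (Suc r)
  have "(fps_deriv^^Suc r) U = fps_const (fact r) * (fps_const (of_nat (Suc r)) * U^2 * U^r)"
    by (simp only: funpow.simps o_apply Suc.IH fps_deriv_mult_const_left fps_deriv_power U_deriv diff_Suc_1)
  also have "\<dots> = fps_const (fact (Suc r)) * U^(Suc (Suc r))"
    by (simp add: power2_eq_square fps_const_mult[symmetric] algebra_simps del: fps_const_mult)
  finally show ?case .
qed

lemma Uder_nth: "((fps_deriv^^r) U) $ m = fact (m+r) / fact m"
proof (induction r arbitrary: m)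
  case 0 then show ?case by (simp add: U_def)
next
  case (Suc r)
  have "((fps_deriv^^Suc r) U) $ m = of_nat (m+1) * (fact (m+1+r) / fact (m+1))"
    using Suc by simp
  also have "\<dots> = fact (m + Suc r) / fact m"
  proof -
    have e1: "fact (m+1) = (of_nat (m+1)::real) * fact m" by simp
    have e2: "m+1+r = m + Suc r" by simp
    have "of_nat (m+1) * (A / (of_nat (m+1) * B)) = (A / B :: real)" for A B by simp
    then show ?thesis unfolding e1 e2 .
  qed
  finally show ?case .
qed

lemma U_sub: "U - 1 = fps_X * U"
  by (simp add: fps_eq_iff U_def)



theorem theorem7:
  fixes n r :: nat and x :: real
  assumes "x \<noteq> 0"
  shows "poly ((pderiv ^^ r) (central_fubini n)) x =
    fact r / x ^ r * (\<Sum>k\<le>r. real (r choose k) * (-1) ^ (r - k) *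
      (\<Sum>j\<in>compositions k n. multinom n k j * (\<Prod>i\<le>k. poly (central_fubini (j i)) x)))"
proof -
  define xS where "xS = fps_const x * S"
  have xS0: "xS $ 0 = 0" by (simp add: xS_def S0)
  have xSp: "(xS ^ k) $ m = x ^ k * (S ^ k) $ m" for k m
    by (simp add: xS_def power_mult_distrib fps_const_power)
  define G where "G = U oo xS"
  have G_nth: "G $ m = (\<Sum>k\<le>m. x ^ k * (S ^ k) $ m)" for m
    by (simp add: G_def fps_compose_nth U_def xSp atLeast0AtMost)
  have poly_C: "poly (central_fubini m) x = fact m * G $ m" for m
  proof -
    have "poly (central_fubini m) x = (\<Sum>k\<le>m. fact k * central_T m k * x ^ k)"
      by (simp add: central_fubini_def poly_sum poly_monom)
    also have "\<dots> = (\<Sum>k\<le>m. fact m * ((S ^ k) $ m * x ^ k))"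
      by (rule sum.cong) (auto simp: T_S)
    also have "\<dots> = fact m * G $ m"
      by (simp add: G_nth sum_distrib_left mult_ac)
    finally show ?thesis .
  qed
  have G_sub: "G - 1 = xS * G"
  proof -
    have "G - 1 = (U - 1) oo xS" by (simp add: G_def fps_compose_sub_distrib)
    also have "\<dots> = xS * G" by (simp add: U_sub fps_compose_mult_distrib[OF xS0] xS0 G_def)
    finally show ?thesis .
  qed
  define Q where "Q = S ^ r * G ^ Suc r"
  have BI: "(\<Sum>k\<le>r. fps_const (real (r choose k) * (-1) ^ (r - k)) * G ^ Suc k) = fps_const (x ^ r) * Q"
  proof -
    have "(G + (-1)) ^ r = (\<Sum>k\<le>r. of_nat (r choose k) * G ^ k * (-1) ^ (r - k))"
      by (rule binomial_ring)
    then have "G * (G - 1) ^ r = (\<Sum>k\<le>r. G * (of_nat (r choose k) * G ^ k * (-1) ^ (r - k)))"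
      by (simp add: sum_distrib_left)
    also have "\<dots> = (\<Sum>k\<le>r. fps_const (real (r choose k) * (-1) ^ (r - k)) * G ^ Suc k)"
    proof (rule sum.cong[OF refl])
      fix k
      have m1: "(-1::real fps) ^ m = fps_const ((-1) ^ m)" for m
      proof -
        have "(-1::real fps) = fps_const (-1)" by (metis fps_const_1_eq_1 fps_const_neg)
        then show ?thesis by (simp only: fps_const_power)
      qed
      have oc: "(of_nat c :: real fps) = fps_const (real c)" for c by (simp add: fps_of_nat)
      show "G * (of_nat (r choose k) * G ^ k * (-1) ^ (r - k)) = fps_const (real (r choose k) * (-1) ^ (r - k)) * G ^ Suc k"
        unfolding m1 oc by (simp add: fps_const_mult[symmetric] mult_ac del: fps_const_mult)
    qed
    finally have "(\<Sum>k\<le>r. fps_const (real (r choose k) * (-1) ^ (r - k)) * G ^ Suc k) = G * (G - 1) ^ r" ..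
    also have "\<dots> = fps_const (x ^ r) * Q"
      by (simp add: G_sub Q_def xS_def power_mult_distrib fps_const_power mult_ac)
    finally show ?thesis .
  qed
  have inner: "(\<Sum>j\<in>compositions k n. multinom n k j * (\<Prod>i\<le>k. poly (central_fubini (j i)) x))
      = fact n * (G ^ Suc k) $ n" for k
  proof -
    have "(\<Sum>j\<in>compositions k n. multinom n k j * (\<Prod>i\<le>k. poly (central_fubini (j i)) x))
       = (\<Sum>j\<in>compositions k n. fact n * (\<Prod>i\<le>k. G $ (j i)))"
    proof (rule sum.cong[OF refl])
      fix j
      have nz: "(\<Prod>i\<le>k. fact (j i) :: real) \<noteq> 0" by (simp add: prod_zero_iff)
      show "multinom n k j * (\<Prod>i\<le>k. poly (central_fubini (j i)) x) = fact n * (\<Prod>i\<le>k. G $ (j i))"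
        using nz by (simp add: poly_C prod.distrib multinom_def)
    qed
    also have "\<dots> = fact n * (G ^ Suc k) $ n"
      by (simp only: fps_power_comp sum_distrib_left)
    finally show ?thesis .
  qed
  have RHS: "(\<Sum>k\<le>r. real (r choose k) * (-1) ^ (r - k) *
      (\<Sum>j\<in>compositions k n. multinom n k j * (\<Prod>i\<le>k. poly (central_fubini (j i)) x)))
      = fact n * x ^ r * Q $ n"
  proof -
    have "(\<Sum>k\<le>r. real (r choose k) * (-1) ^ (r - k) *
      (\<Sum>j\<in>compositions k n. multinom n k j * (\<Prod>i\<le>k. poly (central_fubini (j i)) x)))
      = fact n * (\<Sum>k\<le>r. fps_const (real (r choose k) * (-1) ^ (r - k)) * G ^ Suc k) $ n"
    proof -
      have e: "(\<Sum>k\<le>r. fps_const (real (r choose k) * (-1) ^ (r - k)) * G ^ Suc k) $ n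
          = (\<Sum>k\<le>r. real (r choose k) * (-1) ^ (r - k) * (G ^ Suc k) $ n)"
        by (simp only: fps_sum_nth fps_mult_left_const_nth)
      show ?thesis unfolding inner e by (simp add: sum_distrib_left mult_ac del: power_Suc)
    qed
    also have "\<dots> = fact n * x ^ r * Q $ n" unfolding BI by simp
    finally show ?thesis .
  qed
  define Pr where "Pr = fps_X ^ r * (fps_deriv ^^ r) U"
  have Pr_nth: "Pr $ k = ff k r" for k
    by (auto simp: Pr_def fps_X_power_mult_nth Uder_nth ff_def)
  have Pr_comp: "Pr oo xS = fps_const (fact r) * fps_const (x ^ r) * Q"
  proof -
    have "Pr oo xS = (fps_X oo xS) ^ r * (fps_const (fact r) * ((U oo xS) ^ Suc r))"
      by (simp add: Pr_def Uder fps_compose_mult_distrib[OF xS0] fps_compose_power[OF xS0])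
    also have "\<dots> = fps_const (fact r) * fps_const (x ^ r) * Q"
      unfolding fps_X_fps_compose_startby0[OF xS0] G_def[symmetric]
      by (simp add: Q_def xS_def power_mult_distrib fps_const_power mult_ac)
    finally show ?thesis .
  qed
  have LHS: "poly ((pderiv ^^ r) (central_fubini n)) x * x ^ r = fact n * (Pr oo xS) $ n"
  proof -
    have "poly ((pderiv ^^ r) (central_fubini n)) x * x ^ r =
        (\<Sum>k\<le>n. fact k * central_T n k * ff k r * (x ^ (k - r) * x ^ r))"
      by (simp add: central_fubini_def higher_pderiv_sum hpderiv_monom poly_sum poly_monom
          sum_distrib_right sum_distrib_left mult_ac)
    also have "\<dots> = (\<Sum>k\<le>n. fact n * (ff k r * (x ^ k * (S ^ k) $ n)))"
    proof (rule sum.cong[OF refl])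
      fix k assume k: "k \<in> {..n}"
      show "fact k * central_T n k * ff k r * (x ^ (k - r) * x ^ r) = fact n * (ff k r * (x ^ k * (S ^ k) $ n))"
      proof (cases "r \<le> k")
        case True
        then have "x ^ (k - r) * x ^ r = x ^ k" by (simp add: power_add[symmetric])
        then show ?thesis using k by (simp add: T_S mult_ac)
      next
        case False
        then show ?thesis by (simp add: ff_def)
      qed
    qed
    also have "\<dots> = fact n * (Pr oo xS) $ n"
      by (simp add: fps_compose_nth Pr_nth xSp atLeast0AtMost sum_distrib_left)
    finally show ?thesis .
  qed
  have xr: "x ^ r \<noteq> 0" using assms by simp
  have "poly ((pderiv ^^ r) (central_fubini n)) x = fact n * (Pr oo xS) $ n / x ^ r"
    using LHS xr by (simp add: field_simps)
  also have "\<dots> = fact r / x ^ r * (fact n * x ^ r * Q $ n)"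
    by (simp add: Pr_comp)
  finally show ?thesis unfolding RHS .
qed


end
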